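(* Let $\mathbf a=(a_1,\ldots,a_n)\in\mathbb Z_{\geq1}^n$ and $\mathbf b=(b_1,\ldots,b_m)\in\mathbb Z_{\geq1}^m$. If $(\mathbf x,\mathbf y)$, with $\mathbf x=(x_1,\ldots,x_n)$ and $\mathbf y=(y_1,\ldots,y_m)$, is a minimal solution of the equation $x_1a_1+\cdots+x_na_n=y_1b_1+\cdots+y_mb_m$, then there exist rational numbers $\lambda_{i,j}$ ($1\leq i\leq n$, $1\leq j\leq m$) such that $\sum_{j=1}^m \lambda_{i,j} b_j=x_i$ for $1\leq i\leq n$; $\sum_{i=1}^n \lambda_{i,j} a_i=y_j$ for $1\leq j\leq m$; $\sum_{i=1}^n\sum_{j=1}^m\lambda_{i,j}\leq 1$; and $\lambda_{i,j}\geq 0$ for all $1\leq i\leq n$, $1\leq j\leq m$.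
   Context: $\mathcal S(\mathbf a,\mathbf b)$ denotes the set of all pairs $(\mathbf x,\mathbf y)\in\mathbb Z_{\geq0}^n\times\mathbb Z_{\geq0}^m$ satisfying $\sum_i x_ia_i=\sum_j y_jb_j$. A solution in $\mathcal S(\mathbf a,\mathbf b)$ is called minimal if it is nonzero and cannot be written as the sum of two nonzero solutions in $\mathcal S(\mathbf a,\mathbf b)$; the set of minimal solutions is denoted $\mathcal H(\mathbf a,\mathbf b)$ (the Hilbert basis of the cone $\{(\mathbf x,\mathbf y)\in\mathbb R_{\geq0}^{n+m}:\mathbf a\cdot\mathbf x=\mathbf b\cdot\mathbf y\}$). *)

theory Defs
  imports Complex_Main
begin

text \<open>Vectors in Z_{>=0}^n are represented as functions nat => nat with indices 0..n-1
  (0-based), and required to vanish outside the index range.\<close>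

definition in_S :: "nat \<Rightarrow> nat \<Rightarrow> (nat \<Rightarrow> nat) \<Rightarrow> (nat \<Rightarrow> nat) \<Rightarrow> (nat \<Rightarrow> nat) \<Rightarrow> (nat \<Rightarrow> nat) \<Rightarrow> bool" where
  "in_S n m a b x y \<longleftrightarrow> (\<forall>i\<ge>n. x i = 0) \<and> (\<forall>j\<ge>m. y j = 0) \<and>
     (\<Sum>i<n. x i * a i) = (\<Sum>j<m. y j * b j)"

definition minimal_sol :: "nat \<Rightarrow> nat \<Rightarrow> (nat \<Rightarrow> nat) \<Rightarrow> (nat \<Rightarrow> nat) \<Rightarrow> (nat \<Rightarrow> nat) \<Rightarrow> (nat \<Rightarrow> nat) \<Rightarrow> bool" where
  "minimal_sol n m a b x y \<longleftrightarrow> in_S n m a b x y \<and> (x, y) \<noteq> ((\<lambda>_. 0), (\<lambda>_. 0)) \<and>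
     \<not> (\<exists>x1 y1 x2 y2. in_S n m a b x1 y1 \<and> in_S n m a b x2 y2 \<and>
          (x1, y1) \<noteq> ((\<lambda>_. 0), (\<lambda>_. 0)) \<and> (x2, y2) \<noteq> ((\<lambda>_. 0), (\<lambda>_. 0)) \<and>
          (\<forall>i. x i = x1 i + x2 i) \<and> (\<forall>j. y j = y1 j + y2 j))"

end

theory Submission
  imports Defs
begin

definition P :: "nat \<Rightarrow> nat \<Rightarrow> (nat \<Rightarrow> nat) \<Rightarrow> (nat \<Rightarrow> nat) \<Rightarrow> (nat \<Rightarrow> nat) \<Rightarrow> (nat \<Rightarrow> nat) \<Rightarrow> bool" where
 "P n m a b x y \<longleftrightarrow> (\<exists>lam :: nat \<Rightarrow> nat \<Rightarrow> rat.
    (\<forall>i<n. (\<Sum>j<m. lam i j * of_nat (b j)) = of_nat (x i)) \<and>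
    (\<forall>j<m. (\<Sum>i<n. lam i j * of_nat (a i)) = of_nat (y j)) \<and>
    (\<Sum>i<n. \<Sum>j<m. lam i j) \<le> 1 \<and>
    (\<forall>i<n. \<forall>j<m. lam i j \<ge> 0))"

lemma in_S_swap: "in_S n m a b x y = in_S m n b a y x"
  by (auto simp: in_S_def)

lemma minimal_swap: "minimal_sol n m a b x y \<Longrightarrow> minimal_sol m n b a y x"
  unfolding minimal_sol_def in_S_swap[of n m a b] 
  by (auto simp: in_S_swap)

lemma P_swap: "P m n b a y x \<Longrightarrow> P n m a b x y"
  unfolding P_def
proof (elim exE conjE)
  fix lam :: "nat \<Rightarrow> nat \<Rightarrow> rat"
  assume h: "\<forall>i<m. (\<Sum>j<n. lam i j * of_nat (a j)) = of_nat (y i)"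
    "\<forall>j<n. (\<Sum>i<m. lam i j * of_nat (b i)) = of_nat (x j)"
    "(\<Sum>i<m. \<Sum>j<n. lam i j) \<le> 1" "\<forall>i<m. \<forall>j<n. 0 \<le> lam i j"
  show "\<exists>lam :: nat \<Rightarrow> nat \<Rightarrow> rat.
    (\<forall>i<n. (\<Sum>j<m. lam i j * of_nat (b j)) = of_nat (x i)) \<and>
    (\<forall>j<m. (\<Sum>i<n. lam i j * of_nat (a i)) = of_nat (y j)) \<and>
    (\<Sum>i<n. \<Sum>j<m. lam i j) \<le> 1 \<and>
    (\<forall>i<n. \<forall>j<m. lam i j \<ge> 0)"
    apply (rule exI[of _ "\<lambda>i j. lam j i"])
    using h by (simp add: sum.swap[of _ "{..<n}"])
qed

lemma sum_dec: fixes f c :: "nat \<Rightarrow> nat" shows "i < n \<Longrightarrow> (\<Sum>k<n. f k * c k) = (\<Sum>k<n. (f(i := f i - 1)) k * c k) + (if f i > 0 then c i else 0)"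
proof -
  assume i: "i < n"
  have "(\<Sum>k<n. f k * c k) = f i * c i + (\<Sum>k\<in>{..<n}-{i}. f k * c k)"
    using i by (simp add: sum.remove[of "{..<n}" i])
  moreover have "(\<Sum>k<n. (f(i := f i - 1)) k * c k) = (f i - 1) * c i + (\<Sum>k\<in>{..<n}-{i}. f k * c k)"
    using i by (simp add: sum.remove[of "{..<n}" i])
  ultimately show ?thesis by (cases "f i") auto
qed

lemma sum_inc: fixes f c :: "nat \<Rightarrow> nat" shows "i < n \<Longrightarrow> (\<Sum>k<n. (f(i := f i + 1)) k * c k) = (\<Sum>k<n. f k * c k) + c i"
  using sum_dec[of i n "f(i := f i + 1)" c] by simp

lemma sum_ind: "finite A \<Longrightarrow> (\<Sum>k\<in>A. (if k = i then c else 0) * (f k :: 'a :: comm_semiring_1)) = (if i \<in> A then c * f i else 0)"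
proof -
  assume "finite A"
  have "(\<Sum>k\<in>A. (if k = i then c else 0) * f k) = (\<Sum>k\<in>A. if k = i then c * f i else 0)"
    by (rule sum.cong) auto
  then show ?thesis using \<open>finite A\<close> by simp
qed

lemma sum_if_const: "(\<Sum>l\<in>A. if Q then g l else 0) = (if Q then sum g A else 0)"
  by auto

lemma base:
  assumes min: "minimal_sol n m a b x y" and i: "i < n" and j: "j < m"
    and xi: "x i > 0" and yj: "y j > 0" and eq: "a i = b j" and bj: "b j \<ge> 1"
  shows "P n m a b x y"
proof -
  have S: "in_S n m a b x y" using min by (simp add: minimal_sol_def)
  define x1 where "x1 = (\<lambda>k::nat. if k = i then 1 else (0::nat))"
  define y1 where "y1 = (\<lambda>k::nat. if k = j then 1 else (0::nat))"
  define x2 where "x2 = x(i := x i - 1)"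
  define y2 where "y2 = y(j := y j - 1)"
  have sx1: "(\<Sum>k<n. x1 k * a k) = a i" using i by (simp add: x1_def sum_ind)
  have sy1: "(\<Sum>k<m. y1 k * b k) = b j" using j by (simp add: y1_def sum_ind)
  have S1: "in_S n m a b x1 y1" using sx1 sy1 eq i j by (auto simp: in_S_def x1_def y1_def)
  have S2: "in_S n m a b x2 y2"
    using S sum_dec[of i n x a] sum_dec[of j m y b] xi yj i j eq
    by (auto simp: in_S_def x2_def y2_def)
  have nz1: "(x1, y1) \<noteq> ((\<lambda>_. 0), (\<lambda>_. 0))" by (auto simp: x1_def fun_eq_iff)
  have sx: "\<forall>k. x k = x1 k + x2 k" using xi by (auto simp: x1_def x2_def)
  have sy: "\<forall>k. y k = y1 k + y2 k" using yj by (auto simp: y1_def y2_def)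
  have z: "(x2, y2) = ((\<lambda>_. 0), (\<lambda>_. 0))"
    using min S1 S2 nz1 sx sy unfolding minimal_sol_def by blast
  have xe: "x = x1" using sx z by (auto simp: fun_eq_iff)
  have ye: "y = y1" using sy z by (auto simp: fun_eq_iff)
  show ?thesis unfolding P_def
    apply (rule exI[of _ "\<lambda>k l. if k = i then (if l = j then 1 / of_nat (b j) else 0) else 0"])
    using i j bj eq by (auto simp: xe ye x1_def y1_def sum_ind sum_if_const)
qed

lemma step:
  assumes IH: "\<And>n' m' a' b' x' y'. (\<Sum>k<n'. x' k * a' k) < T \<Longrightarrow> \<forall>k<n'. a' k \<ge> 1 \<Longrightarrow>
      \<forall>l<m'. b' l \<ge> 1 \<Longrightarrow> minimal_sol n' m' a' b' x' y' \<Longrightarrow> P n' m' a' b' x' y'"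
    and T: "T = (\<Sum>k<n. x k * a k)"
    and apos: "\<forall>k<n. a k \<ge> 1" and bpos: "\<forall>l<m. b l \<ge> 1"
    and min: "minimal_sol n m a b x y" and i: "i < n" and j: "j < m"
    and xi: "x i > 0" and yj: "y j > 0" and amax: "\<forall>k<n. x k > 0 \<longrightarrow> a k \<le> a i"
    and lt: "a i < b j"
  shows "P n m a b x y"
proof -
  have S: "in_S n m a b x y" using min by (simp add: minimal_sol_def)
  define x' where "x' = x(i := x i - 1)"
  define y' where "y' = (y(j := y j - 1))(m := 1)"
  define b' where "b' = b(m := b j - a i)"
  have sx: "(\<Sum>k<n. x k * a k) = (\<Sum>k<n. x' k * a k) + a i"
    using sum_dec[of i n x a] i xi by (simp add: x'_def)
  have sy: "(\<Sum>l<m. y l * b l) = (\<Sum>l<m. (y(j := y j - 1)) l * b l) + b j"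
    using sum_dec[of j m y b] j yj by simp
  have sy': "(\<Sum>l<Suc m. y' l * b' l) = (\<Sum>l<m. (y(j := y j - 1)) l * b l) + (b j - a i)"
  proof -
    have "(\<Sum>l<m. y' l * b' l) = (\<Sum>l<m. (y(j := y j - 1)) l * b l)"
      by (rule sum.cong) (auto simp: y'_def b'_def)
    then show ?thesis by (simp add: y'_def b'_def)
  qed
  have Seq: "(\<Sum>k<n. x k * a k) = (\<Sum>l<m. y l * b l)" using S by (simp add: in_S_def)
  have eqS': "(\<Sum>k<n. x' k * a k) = (\<Sum>l<Suc m. y' l * b' l)"
    using sx sy sy' Seq lt by linarith
  have S': "in_S n (Suc m) a b' x' y'"
    using S i j eqS' unfolding in_S_def by (auto simp: x'_def y'_def)
  have nosplit: False if
    h1: "in_S n (Suc m) a b' x1 y1" and h2: "in_S n (Suc m) a b' x2 y2"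
    and nz2: "(x2, y2) \<noteq> ((\<lambda>_. 0), (\<lambda>_. 0))"
    and hx: "\<forall>k. x' k = x1 k + x2 k" and hy: "\<forall>l. y' l = y1 l + y2 l" and y1m: "y1 m = 1"
    for x1 y1 x2 y2
  proof -
    have y2m: "y2 m = 0" using hy y1m by (auto simp: y'_def dest: spec[of _ m])
    define x1' where "x1' = x1(i := x1 i + 1)"
    define y1' where "y1' = (y1(m := 0))(j := y1 j + 1)"
    have e1: "(\<Sum>k<n. x1 k * a k) = (\<Sum>l<Suc m. y1 l * b' l)" using h1 by (simp add: in_S_def)
    have e1b: "(\<Sum>l<Suc m. y1 l * b' l) = (\<Sum>l<m. y1 l * b l) + (b j - a i)"
    proof -
      have "(\<Sum>l<m. y1 l * b' l) = (\<Sum>l<m. y1 l * b l)"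
        by (rule sum.cong) (auto simp: b'_def)
      then show ?thesis by (simp add: y1m b'_def)
    qed
    have e1c: "(\<Sum>l<m. y1' l * b l) = (\<Sum>l<m. (y1(j := y1 j + 1)) l * b l)"
      by (rule sum.cong) (auto simp: y1'_def)
    have S1: "in_S n m a b x1' y1'"
      using h1 i j e1 e1b e1c sum_inc[of i n x1 a] sum_inc[of j m y1 b] lt
      unfolding in_S_def by (auto simp: x1'_def y1'_def)
    have e2: "(\<Sum>l<Suc m. y2 l * b' l) = (\<Sum>l<m. y2 l * b l)"
    proof -
      have "(\<Sum>l<m. y2 l * b' l) = (\<Sum>l<m. y2 l * b l)"
        by (rule sum.cong) (auto simp: b'_def)
      then show ?thesis by (simp add: y2m)
    qed
    have S2: "in_S n m a b x2 y2"
      using h2 e2 y2m unfolding in_S_def by (metis le_antisym not_less_eq_eq)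
    have nz1: "(x1', y1') \<noteq> ((\<lambda>_. 0), (\<lambda>_. 0))" by (auto simp: x1'_def fun_eq_iff)
    have ex: "\<forall>k. x k = x1' k + x2 k"
    proof
      fix k show "x k = x1' k + x2 k"
        using hx[rule_format, of k] xi by (cases "k = i") (auto simp: x'_def x1'_def)
    qed
    have ey: "\<forall>l. y l = y1' l + y2 l"
    proof
      fix l
      have ym: "y m = 0" using S by (simp add: in_S_def)
      show "y l = y1' l + y2 l"
        using hy[rule_format, of l] yj j ym y2m
        by (cases "l = j"; cases "l = m") (auto simp: y'_def y1'_def)
    qed
    show False using min S1 S2 nz1 nz2 ex ey unfolding minimal_sol_def by blast
  qed
  have min': "minimal_sol n (Suc m) a b' x' y'"
  proof -
    have "(x', y') \<noteq> ((\<lambda>_. 0), (\<lambda>_. 0))" by (auto simp: y'_def fun_eq_iff)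
    moreover have "\<not> (\<exists>x1 y1 x2 y2. in_S n (Suc m) a b' x1 y1 \<and> in_S n (Suc m) a b' x2 y2 \<and>
          (x1, y1) \<noteq> ((\<lambda>_. 0), (\<lambda>_. 0)) \<and> (x2, y2) \<noteq> ((\<lambda>_. 0), (\<lambda>_. 0)) \<and>
          (\<forall>i. x' i = x1 i + x2 i) \<and> (\<forall>j. y' j = y1 j + y2 j))"
    proof
      assume "\<exists>x1 y1 x2 y2. in_S n (Suc m) a b' x1 y1 \<and> in_S n (Suc m) a b' x2 y2 \<and>
          (x1, y1) \<noteq> ((\<lambda>_. 0), (\<lambda>_. 0)) \<and> (x2, y2) \<noteq> ((\<lambda>_. 0), (\<lambda>_. 0)) \<and>
          (\<forall>i. x' i = x1 i + x2 i) \<and> (\<forall>j. y' j = y1 j + y2 j)"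
      then obtain x1 y1 x2 y2 where h: "in_S n (Suc m) a b' x1 y1" "in_S n (Suc m) a b' x2 y2"
          "(x1, y1) \<noteq> ((\<lambda>_. 0), (\<lambda>_. 0))" "(x2, y2) \<noteq> ((\<lambda>_. 0), (\<lambda>_. 0))"
          "\<forall>i. x' i = x1 i + x2 i" "\<forall>j. y' j = y1 j + y2 j" by blast
      have "y1 m + y2 m = 1" using h(6) by (auto simp: y'_def dest: spec[of _ m])
      then have "y1 m = 1 \<or> y2 m = 1" by arith
      then show False
      proof
        assume "y1 m = 1" then show False using nosplit[OF h(1) h(2) h(4) h(5) h(6)] by blast
      next
        assume "y2 m = 1" then show False using nosplit[OF h(2) h(1) h(3)] h(5) h(6) by (simp add: add.commute)
      qed
    qed
    ultimately show ?thesis using S' by (simp add: minimal_sol_def)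
  qed
  have lt': "(\<Sum>k<n. x' k * a k) < T" using sx T apos i by fastforce
  have bpos': "\<forall>l<Suc m. b' l \<ge> 1" using bpos lt by (auto simp: b'_def less_Suc_eq)
  have "P n (Suc m) a b' x' y'" using IH[OF lt' apos bpos' min'] .
  then obtain lam' :: "nat \<Rightarrow> nat \<Rightarrow> rat" where
      R: "\<forall>k<n. (\<Sum>l<Suc m. lam' k l * of_nat (b' l)) = of_nat (x' k)"
    and C: "\<forall>l<Suc m. (\<Sum>k<n. lam' k l * of_nat (a k)) = of_nat (y' l)"
    and Sm: "(\<Sum>k<n. \<Sum>l<Suc m. lam' k l) \<le> 1"
    and N: "\<forall>k<n. \<forall>l<Suc m. lam' k l \<ge> 0"
    unfolding P_def by blast
  define B where "B = (of_nat (b j) :: rat)"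
  define D where "D = (of_nat (b j - a i) :: rat)"
  have D: "D = B - of_nat (a i)" using lt by (simp add: D_def B_def of_nat_diff)
  have Bpos: "B > 0" using lt by (simp add: B_def)
  have Dpos: "D > 0" using lt by (simp add: D_def)
  have b'm: "of_nat (b' m) = D" by (simp add: b'_def D_def)
  define c where "c k = lam' k m * D / B + (if k = i then 1 / B else 0)" for k
  define lam where "lam k l = lam' k l + (if l = j then c k else 0)" for k l
  have lamsplit: "(\<Sum>l<Suc m. lam' k l * of_nat (b' l)) = (\<Sum>l<m. lam' k l * of_nat (b l)) + lam' k m * D" for k
  proof -
    have "(\<Sum>l<m. lam' k l * of_nat (b' l)) = (\<Sum>l<m. lam' k l * of_nat (b l))"
      by (rule sum.cong) (auto simp: b'_def)
    then show ?thesis using b'm by simp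
  qed
  have rows: "\<forall>k<n. (\<Sum>l<m. lam k l * of_nat (b l)) = of_nat (x k)"
  proof (intro allI impI)
    fix k assume k: "k < n"
    have "(\<Sum>l<m. lam k l * of_nat (b l)) = (\<Sum>l<m. lam' k l * of_nat (b l)) + c k * B"
      using j by (simp add: lam_def distrib_right sum.distrib sum_ind B_def)
    also have "c k * B = lam' k m * D + (if k = i then 1 else 0)"
      using Bpos by (simp add: c_def field_simps)
    also have "(\<Sum>l<m. lam' k l * of_nat (b l)) + (lam' k m * D + (if k = i then 1 else 0))
        = of_nat (x' k) + (if k = i then 1 else 0)"
      using R k lamsplit by simp
    also have "\<dots> = of_nat (x k)" using xi by (simp add: x'_def of_nat_diff)
    finally show "(\<Sum>l<m. lam k l * of_nat (b l)) = of_nat (x k)" .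
  qed
  have mu1: "(\<Sum>k<n. lam' k m * of_nat (a k)) = 1" using C by (simp add: y'_def)
  have csum: "(\<Sum>k<n. c k * of_nat (a k)) = 1"
  proof -
    have "(\<Sum>k<n. c k * of_nat (a k)) = D / B * (\<Sum>k<n. lam' k m * of_nat (a k)) + of_nat (a i) / B"
    proof -
      have "(\<Sum>k<n. c k * of_nat (a k)) = (\<Sum>k<n. D / B * (lam' k m * of_nat (a k)))
          + (\<Sum>k<n. (if k = i then 1 / B else 0) * of_nat (a k))"
        by (simp only: sum.distrib[symmetric]) (rule sum.cong, auto simp: c_def algebra_simps)
      also have "\<dots> = D / B * (\<Sum>k<n. lam' k m * of_nat (a k)) + of_nat (a i) / B"
        using i by (simp add: sum_distrib_left[symmetric] sum_ind sum_divide_distrib[symmetric])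
      finally show ?thesis .
    qed
    also have "\<dots> = 1" using mu1 D Bpos by (simp add: field_simps)
    finally show ?thesis .
  qed
  have cols: "\<forall>l<m. (\<Sum>k<n. lam k l * of_nat (a k)) = of_nat (y l)"
  proof (intro allI impI)
    fix l assume l: "l < m"
    have "(\<Sum>k<n. lam k l * of_nat (a k)) = (\<Sum>k<n. lam' k l * of_nat (a k)) + (if l = j then 1 else 0)"
      using csum by (simp add: lam_def distrib_right sum.distrib sum_if_const)
    also have "\<dots> = of_nat (y' l) + (if l = j then 1 else 0)" using C l by simp
    also have "\<dots> = of_nat (y l)" using yj l by (simp add: y'_def of_nat_diff)
    finally show "(\<Sum>k<n. lam k l * of_nat (a k)) = of_nat (y l)" .
  qed
  have mule: "lam' k m * of_nat (a k) \<le> lam' k m * of_nat (a i)" if k: "k < n" for k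
  proof (cases "x k > 0")
    case True
    then show ?thesis using amax k N by (simp add: mult_left_mono)
  next
    case False
    then have "x' k = 0" using xi by (auto simp: x'_def)
    then have "(\<Sum>l<Suc m. lam' k l * of_nat (b' l)) = 0" using R k by simp
    moreover have "lam' k m * of_nat (b' m) \<le> (\<Sum>l<Suc m. lam' k l * of_nat (b' l))"
      by (rule member_le_sum) (use N k in auto)
    ultimately have "lam' k m * D \<le> 0" using b'm by simp
    then have "lam' k m = 0" using N k Dpos by (simp add: mult_le_0_iff) (meson antisym lessI)
    then show ?thesis by simp
  qed
  have one: "1 \<le> of_nat (a i) * (\<Sum>k<n. lam' k m)"
  proof -
    have "(\<Sum>k<n. lam' k m * of_nat (a k)) \<le> (\<Sum>k<n. lam' k m * of_nat (a i))"
      by (rule sum_mono) (use mule in auto)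
    then show ?thesis using mu1 by (simp add: sum_distrib_left mult.commute)
  qed
  have cle: "(\<Sum>k<n. c k) \<le> (\<Sum>k<n. lam' k m)"
  proof -
    have "(\<Sum>k<n. c k) = D / B * (\<Sum>k<n. lam' k m) + 1 / B"
      using i by (simp add: c_def sum.distrib sum_divide_distrib sum_distrib_left field_simps)
    also have "\<dots> \<le> (\<Sum>k<n. lam' k m)"
    proof -
      have "B * (\<Sum>k<n. lam' k m) = D * (\<Sum>k<n. lam' k m) + of_nat (a i) * (\<Sum>k<n. lam' k m)"
        unfolding D by (simp add: algebra_simps)
      then show ?thesis using one Bpos by (simp add: field_simps)
    qed
    finally show ?thesis .
  qed
  have tot: "(\<Sum>k<n. \<Sum>l<m. lam k l) = (\<Sum>k<n. \<Sum>l<m. lam' k l) + (\<Sum>k<n. c k)"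
    using j by (simp add: lam_def sum.distrib)
  have tot': "(\<Sum>k<n. \<Sum>l<Suc m. lam' k l) = (\<Sum>k<n. \<Sum>l<m. lam' k l) + (\<Sum>k<n. lam' k m)"
    by (simp add: sum.distrib)
  have sumle: "(\<Sum>k<n. \<Sum>l<m. lam k l) \<le> 1" using tot tot' cle Sm by linarith
  have cnn: "c k \<ge> 0" if "k < n" for k
    using N that Dpos Bpos by (simp add: c_def)
  have nn: "\<forall>k<n. \<forall>l<m. lam k l \<ge> 0"
    using N cnn by (simp add: lam_def)
  show ?thesis unfolding P_def using rows cols sumle nn by blast
qed

lemma main:
  "\<forall>k<n. a k \<ge> 1 \<Longrightarrow> \<forall>l<m. b l \<ge> 1 \<Longrightarrow> minimal_sol n m a b x y \<Longrightarrow> P n m a b x y"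
proof (induction "\<Sum>k<n. x k * a k" arbitrary: n m a b x y rule: less_induct)
  case less
  have S: "in_S n m a b x y" using less.prems(3) by (simp add: minimal_sol_def)
  have nz: "(x, y) \<noteq> ((\<lambda>_. 0), (\<lambda>_. 0))" using less.prems(3) by (simp add: minimal_sol_def)
  have Seq: "(\<Sum>k<n. x k * a k) = (\<Sum>l<m. y l * b l)" using S by (simp add: in_S_def)
  have pos: "(\<Sum>k<n. x k * a k) \<noteq> 0"
  proof
    assume h: "(\<Sum>k<n. x k * a k) = 0"
    then have "\<forall>k<n. x k = 0" using less.prems(1) by (simp, metis lessThan_iff not_one_le_zero One_nat_def)
    moreover have "\<forall>l<m. y l = 0" using h Seq less.prems(2) by (simp, metis lessThan_iff not_one_le_zero One_nat_def)
    ultimately have "x = (\<lambda>_. 0)" "y = (\<lambda>_. 0)" using S unfolding in_S_def fun_eq_iff by (metis not_less)+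
    then show False using nz by simp
  qed
  define X where "X = {k. k < n \<and> x k > 0}"
  define Y where "Y = {l. l < m \<and> y l > 0}"
  have Xne: "X \<noteq> {}"
  proof
    assume "X = {}"
    then have "\<forall>k<n. x k = 0" by (auto simp: X_def)
    then show False using pos by simp
  qed
  have Yne: "Y \<noteq> {}"
  proof
    assume "Y = {}"
    then have "\<forall>l<m. y l = 0" by (auto simp: Y_def)
    then show False using pos Seq by simp
  qed
  have fX: "finite X" by (simp add: X_def)
  have fY: "finite Y" by (simp add: Y_def)
  have "Max (a ` X) \<in> a ` X" using fX Xne by (intro Max_in) auto
  then obtain i where iX: "i \<in> X" and ia: "a i = Max (a ` X)" by (metis imageE)
  have "Max (b ` Y) \<in> b ` Y" using fY Yne by (intro Max_in) auto
  then obtain j where jY: "j \<in> Y" and jb: "b j = Max (b ` Y)" by (metis imageE)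
  have amax: "\<forall>k<n. x k > 0 \<longrightarrow> a k \<le> a i" using ia fX by (auto simp: X_def)
  have bmax: "\<forall>l<m. y l > 0 \<longrightarrow> b l \<le> b j" using jb fY by (auto simp: Y_def)
  have i: "i < n" "x i > 0" using iX by (auto simp: X_def)
  have j: "j < m" "y j > 0" using jY by (auto simp: Y_def)
  have IH: "\<And>n' m' a' b' x' y'. (\<Sum>k<n'. x' k * a' k) < (\<Sum>k<n. x k * a k) \<Longrightarrow> \<forall>k<n'. a' k \<ge> 1 \<Longrightarrow>
      \<forall>l<m'. b' l \<ge> 1 \<Longrightarrow> minimal_sol n' m' a' b' x' y' \<Longrightarrow> P n' m' a' b' x' y'"
    using less.hyps by blast
  consider "a i < b j" | "a i = b j" | "b j < a i" by arith
  then show ?case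
  proof cases
    case 1
    show ?thesis
      by (rule step[OF IH refl less.prems(1,2,3) i(1) j(1) i(2) j(2) amax 1]) auto
  next
    case 2
    then show ?thesis using base[OF less.prems(3) i(1) j(1) i(2) j(2)] less.prems(2) j by auto
  next
    case 3
    have "P m n b a y x"
      by (rule step[OF IH Seq less.prems(2,1) minimal_swap[OF less.prems(3)] j(1) i(1) j(2) i(2) bmax 3]) auto
    then show ?thesis by (rule P_swap)
  qed
qed

theorem theorem1:
  fixes n m :: nat and a b x y :: "nat \<Rightarrow> nat"
  assumes "\<forall>i<n. a i \<ge> 1" and "\<forall>j<m. b j \<ge> 1"
    and "minimal_sol n m a b x y"
  shows "\<exists>lam :: nat \<Rightarrow> nat \<Rightarrow> rat.
    (\<forall>i<n. (\<Sum>j<m. lam i j * of_nat (b j)) = of_nat (x i)) \<and>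
    (\<forall>j<m. (\<Sum>i<n. lam i j * of_nat (a i)) = of_nat (y j)) \<and>
    (\<Sum>i<n. \<Sum>j<m. lam i j) \<le> 1 \<and>
    (\<forall>i<n. \<forall>j<m. lam i j \<ge> 0)"
  using main[OF assms] unfolding P_def .

end
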